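(* Let $i,h,g,f$ be positive integers with $f<g$, $f\le h$, and suppose $g-f<ih$. Let $D$ be the $(i+1)h\times(h+g)$ array whose empty cells are exactly those in rows $[ih+1,(i+1)h]$ and columns $[h+g-f+1,h+g]$, and let $D'$ be the $ih\times(h+g)$ array whose empty cells are exactly those in rows $[ih-(g-f)+1,ih]$ and columns $[1,h]$. Then the bishop is a solution to $T(D)$ if and only if it is a solution to $T(D')$.
   Context: Arrays are partially filled and toroidal; $F(B)$ is the set of filled cells. $s_R(i,j)=(i,j+t)$, $s_C(i,j)=(i+t,j)$ with $t\ge1$ minimal such that the cell is filled. The bishop's move is $s_C\circ s_R$. A move function is a solution to $T(B)$ if it is a permutation of $F(B)$ forming a single cycle of length $|F(B)|$. *)

theory Defs
  imports Main
begin

(* Arrays: m x n toroidal grid, rows 1..m, columns 1..n (1-indexed as in the paper);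
   an array is given by its set of filled cells F. *)

definition cyc :: "nat \<Rightarrow> nat \<Rightarrow> nat \<Rightarrow> nat" where
  "cyc n j t = (j - 1 + t) mod n + 1"

definition grid :: "nat \<Rightarrow> nat \<Rightarrow> (nat \<times> nat) set" where
  "grid m n = {1..m} \<times> {1..n}"

definition sR :: "nat \<Rightarrow> nat \<Rightarrow> (nat \<times> nat) set \<Rightarrow> nat \<times> nat \<Rightarrow> nat \<times> nat" where
  "sR m n F p = (case p of (i, j) \<Rightarrow>
     (i, cyc n j (LEAST t. t \<ge> 1 \<and> (i, cyc n j t) \<in> F)))"

definition sC :: "nat \<Rightarrow> nat \<Rightarrow> (nat \<times> nat) set \<Rightarrow> nat \<times> nat \<Rightarrow> nat \<times> nat" where
  "sC m n F p = (case p of (i, j) \<Rightarrow>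
     (cyc m i (LEAST t. t \<ge> 1 \<and> (cyc m i t, j) \<in> F), j))"

definition bishop :: "nat \<Rightarrow> nat \<Rightarrow> (nat \<times> nat) set \<Rightarrow> nat \<times> nat \<Rightarrow> nat \<times> nat" where
  "bishop m n F = sC m n F \<circ> sR m n F"

definition solves :: "(nat \<times> nat \<Rightarrow> nat \<times> nat) \<Rightarrow> (nat \<times> nat) set \<Rightarrow> bool" where
  "solves mv F \<longleftrightarrow> bij_betw mv F F \<and> (\<forall>x\<in>F. \<forall>y\<in>F. \<exists>k. (mv ^^ k) x = y)"

end

theory Submission
  imports Defs
begin


definition cycl :: "('a \<Rightarrow> 'a) \<Rightarrow> 'a set \<Rightarrow> bool" where
  "cycl f A \<longleftrightarrow> (\<forall>x\<in>A. \<forall>y\<in>A. \<exists>k. (f^^k) x = y)"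

lemma funpow_in: "\<forall>x\<in>A. f x \<in> A \<Longrightarrow> x \<in> A \<Longrightarrow> (f^^k) x \<in> A"
  by (induction k) auto

lemma solves_iff_cycl:
  assumes "finite A" "\<forall>x\<in>A. f x \<in> A"
  shows "solves f A \<longleftrightarrow> cycl f A"
proof
  assume "solves f A" thus "cycl f A" by (simp add: solves_def cycl_def)
next
  assume c: "cycl f A"
  have "f ` A = A"
  proof
    show "f ` A \<subseteq> A" using assms(2) by auto
    show "A \<subseteq> f ` A"
    proof
      fix y assume y: "y \<in> A"
      then have "f y \<in> A" using assms(2) by auto
      with c y obtain k where "(f^^k) (f y) = y" unfolding cycl_def by blast
      hence "f ((f^^k) y) = y" by (metis comp_apply funpow.simps(2) funpow_Suc_right)
      moreover have "(f^^k) y \<in> A" using y assms(2) by (rule_tac funpow_in) auto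
      ultimately show "y \<in> f ` A" by (metis image_eqI)
    qed
  qed
  hence "inj_on f A" using assms(1) by (simp add: eq_card_imp_inj_on)
  with \<open>f ` A = A\<close> c show "solves f A" by (simp add: solves_def cycl_def bij_betw_def)
qed

lemma section_cycl:
  assumes fA: "\<forall>x\<in>A. f x \<in> A" and SA: "S \<subseteq> A"
  and ret: "\<forall>s\<in>S. \<exists>t. 1 \<le> t \<and> (f^^t) s = R s \<and> (\<forall>j. 0<j \<and> j<t \<longrightarrow> (f^^j) s \<notin> S)"
  and RS: "\<forall>s\<in>S. R s \<in> S"
  and reach: "\<forall>x\<in>A. \<exists>k. (f^^k) x \<in> S"
  and cover: "\<forall>y\<in>A. \<exists>s\<in>S. \<exists>k. (f^^k) s = y"
  shows "cycl f A \<longleftrightarrow> cycl R S"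
proof
  assume c: "cycl f A"
  have key: "\<forall>s. s \<in> S \<longrightarrow> (f^^k) s = s' \<longrightarrow> s' \<in> S \<longrightarrow> (\<exists>j. (R^^j) s = s')" for k s'
  proof (induction k rule: less_induct)
    case (less k)
    show ?case
    proof (intro allI impI)
      fix s assume s: "s \<in> S" and e: "(f^^k) s = s'" and s': "s' \<in> S"
      show "\<exists>j. (R^^j) s = s'"
      proof (cases "k = 0")
        case True thus ?thesis using e by (intro exI[of _ 0]) simp
      next
        case False
        obtain t where t: "1 \<le> t" "(f^^t) s = R s" "\<forall>j. 0<j \<and> j<t \<longrightarrow> (f^^j) s \<notin> S"
          using ret s by blast
        have "t \<le> k"
        proof (rule ccontr)
          assume "\<not> t \<le> k" then have "(f^^k) s \<notin> S" using t(3) False by auto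
          thus False using e s' by simp
        qed
        have "(f^^(k-t)) (R s) = s'" using e t(2) \<open>t \<le> k\<close>
          by (metis funpow_add le_add_diff_inverse2 comp_apply)
        moreover have "k - t < k" using t(1) False by simp
        ultimately obtain j where "(R^^j) (R s) = s'" using less RS s s' by blast
        thus ?thesis by (metis funpow_Suc_right comp_apply)
      qed
    qed
  qed
  show "cycl R S" using c SA key unfolding cycl_def by blast
next
  assume c: "cycl R S"
  have fw: "\<exists>k. (f^^k) s = (R^^j) s" if "s \<in> S" for j s
    using that
  proof (induction j arbitrary: s)
    case 0 show ?case by (intro exI[of _ 0]) simp
  next
    case (Suc j)
    obtain t where t: "(f^^t) s = R s" using ret Suc.prems by blast
    obtain k where k: "(f^^k) (R s) = (R^^j) (R s)" using Suc.IH RS Suc.prems by blast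
    have "(f^^(k+t)) s = (R^^Suc j) s" using t k by (metis funpow_add funpow_Suc_right comp_apply)
    thus ?case by blast
  qed
  show "cycl f A" unfolding cycl_def
  proof (intro ballI)
    fix x y assume x: "x \<in> A" and y: "y \<in> A"
    obtain a where a: "(f^^a) x \<in> S" using reach x by blast
    obtain s1 b where s1: "s1 \<in> S" "(f^^b) s1 = y" using cover y by blast
    obtain j where j: "(R^^j) ((f^^a) x) = s1" using c a s1(1) unfolding cycl_def by blast
    obtain c' where "(f^^c') ((f^^a) x) = s1" using fw[OF a, of j] j by auto
    hence "(f^^(b + c' + a)) x = y" using s1(2) by (simp add: funpow_add)
    thus "\<exists>k. (f^^k) x = y" by blast
  qed
qed

lemma reach_row1:
  assumes fA: "\<forall>x\<in>A. f x \<in> A" and bnd: "\<forall>x\<in>A. fst x \<le> m"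
  and step: "\<forall>x\<in>A. fst (f x) = 1 \<or> fst (f x) = Suc (fst x)"
  shows "x \<in> A \<Longrightarrow> \<exists>k. fst ((f^^k) x) = 1"
proof (induction "m - fst x" arbitrary: x rule: less_induct)
  case less
  consider "fst (f x) = 1" | "fst (f x) = Suc (fst x)" using step less.prems by blast
  thus ?case
  proof cases
    case 1 thus ?thesis by (intro exI[of _ 1]) simp
  next
    case 2
    have "f x \<in> A" using fA less.prems by blast
    hence "fst (f x) \<le> m" using bnd by blast
    hence "m - fst (f x) < m - fst x" using 2 by simp
    then obtain k where "fst ((f^^k) (f x)) = 1" using less.hyps \<open>f x \<in> A\<close> by blast
    thus ?thesis by (metis funpow_Suc_right comp_apply)
  qed
qed

lemma cover_row1:
  fixes A :: "(nat \<times> 'b) set"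
  assumes pred: "\<forall>y\<in>A. fst y \<noteq> 1 \<longrightarrow> (\<exists>x\<in>A. f x = y \<and> fst x < fst y)"
  shows "y \<in> A \<Longrightarrow> \<exists>s\<in>A. fst s = 1 \<and> (\<exists>k. (f^^k) s = y)"
proof (induction "fst y" arbitrary: y rule: less_induct)
  case less
  show ?case
  proof (cases "fst y = 1")
    case True thus ?thesis using less.prems by (intro bexI[of _ y]) (auto intro: exI[of _ 0])
  next
    case False
    then obtain x where x: "x\<in>A" "f x = y" "fst x < fst y" using pred less.prems by blast
    then obtain s k where "s\<in>A" "fst s = 1" "(f^^k) s = x" using less.hyps by blast
    thus ?thesis using x(2) by (intro bexI[of _ s]) (auto intro!: exI[of _ "Suc k"])
  qed
qed

lemma sR_eq:
  assumes "1 \<le> t" "(i, cyc n j t) \<in> F" "\<forall>t'. 1 \<le> t' \<and> t' < t \<longrightarrow> (i, cyc n j t') \<notin> F"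
  shows "sR m n F (i,j) = (i, cyc n j t)"
proof -
  have "(LEAST t. t \<ge> 1 \<and> (i, cyc n j t) \<in> F) = t"
    by (rule Least_equality) (use assms in \<open>auto simp: not_less[symmetric]\<close>)
  thus ?thesis by (simp add: sR_def)
qed

lemma sC_eq:
  assumes "1 \<le> t" "(cyc m i t, j) \<in> F" "\<forall>t'. 1 \<le> t' \<and> t' < t \<longrightarrow> (cyc m i t', j) \<notin> F"
  shows "sC m n F (i,j) = (cyc m i t, j)"
proof -
  have "(LEAST t. t \<ge> 1 \<and> (cyc m i t, j) \<in> F) = t"
    by (rule Least_equality) (use assms in \<open>auto simp: not_less[symmetric]\<close>)
  thus ?thesis by (simp add: sC_def)
qed

lemma cyc_range: "0 < n \<Longrightarrow> 1 \<le> cyc n j t \<and> cyc n j t \<le> n"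
  by (simp add: cyc_def Suc_leI)

lemma cyc_add: "0 < n \<Longrightarrow> cyc n (cyc n c a) b = cyc n c (a+b)"
  by (simp add: cyc_def mod_add_left_eq add.assoc)

lemma cyc_0: "1 \<le> c \<Longrightarrow> c \<le> n \<Longrightarrow> cyc n c 0 = c"
  by (simp add: cyc_def)

lemma cyc_small: "1 \<le> c \<Longrightarrow> c + t \<le> n \<Longrightarrow> cyc n c t = c + t"
  by (simp add: cyc_def)

lemma cyc_wrap: "1 \<le> c \<Longrightarrow> c \<le> n \<Longrightarrow> c + t = n + 1 \<Longrightarrow> cyc n c t = 1"
  by (simp add: cyc_def)

lemma cyc_full: "1 \<le> c \<Longrightarrow> c \<le> n \<Longrightarrow> cyc n c n = c"
  unfolding cyc_def by (simp only: mod_add_self2) simp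



lemma cyc_nn: "1 \<le> t \<Longrightarrow> t \<le> n \<Longrightarrow> cyc n n t = t"
proof -
  assume a: "1 \<le> t" "t \<le> n"
  have "n - 1 + t = (t - 1) + n" using a by arith
  thus ?thesis using a unfolding cyc_def by (simp only:) (simp only: mod_add_self2, simp)
qed

lemma mod_once: "(n::nat) \<le> a \<Longrightarrow> a < 2*n \<Longrightarrow> a mod n = a - n"
  by (simp add: le_mod_geq)

locale P48 =
  fixes i h g f :: nat
  assumes i0: "0<i" and h0: "0<h" and g0: "0<g" and f0: "0<f" and fg: "f<g" and fh: "f\<le>h"
    and gf: "g-f < i*h"
begin

definition "n = h+g"
definition "M = i*h"
definition "m = (i+1)*h"
definition "W = h+g-f"
definition "L = i*h-(g-f)"
definition "FD = grid ((i+1)*h) (h+g) - ({i*h+1..(i+1)*h} \<times> {h+g-f+1..h+g})"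
definition "FD' = grid (i*h) (h+g) - ({i*h-(g-f)+1..i*h} \<times> {1..h})"

lemma m_eq: "m = M + h" by (simp add: m_def M_def)
lemma M_ge: "h \<le> M" using i0 by (simp add: M_def)
lemma facts: "n = h+g" "W + f = n" "h < W" "W \<le> n" "L + (g-f) = M" "1 \<le> L" "L < M" "0 < n" "M < m"
  "0 < M" "0 < W" "0<g" "0<h" "f<g" "f \<le> h" "0 < f" "h < n"
  using gf fg fh h0 M_ge g0 f0 by (auto simp: n_def W_def L_def M_def[symmetric] m_eq)

lemma memD: "(r,c) \<in> FD \<longleftrightarrow> 1 \<le> r \<and> r \<le> m \<and> 1 \<le> c \<and> c \<le> n \<and> (r \<le> M \<or> c \<le> W)"
  unfolding FD_def grid_def m_def[symmetric] M_def[symmetric] n_def[symmetric] W_def[symmetric]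
  using facts by (auto simp: m_eq)

lemma memD': "(r,c) \<in> FD' \<longleftrightarrow> 1 \<le> r \<and> r \<le> M \<and> 1 \<le> c \<and> c \<le> n \<and> (r \<le> L \<or> h < c)"
  unfolding FD'_def grid_def M_def[symmetric] n_def[symmetric] L_def[symmetric]
  using facts by auto

abbreviation "bD \<equiv> bishop m n FD"
abbreviation "bD' \<equiv> bishop M n FD'"

lemma cyc1: "1 \<le> c \<Longrightarrow> c \<le> k \<Longrightarrow> cyc k c 1 = (if c < k then c+1 else 1)"
  by (auto simp: cyc_def)

lemma bD_A: "1 \<le> r \<Longrightarrow> r < M \<Longrightarrow> 1 \<le> c \<Longrightarrow> c \<le> n \<Longrightarrow> bD (r,c) = (r+1, cyc n c 1)"
proof -
  assume a: "1 \<le> r" "r < M" "1 \<le> c" "c \<le> n"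
  have r: "sR m n FD (r,c) = (r, cyc n c 1)"
    by (rule sR_eq) (use a facts cyc_range[of n c 1] in \<open>auto simp: memD\<close>)
  have "sC m n FD (r, cyc n c 1) = (cyc m r 1, cyc n c 1)"
    by (rule sC_eq) (use a facts cyc_range[of n c 1] cyc1[of r m] in \<open>auto simp: memD\<close>)
  thus ?thesis using r a facts cyc1[of r m] by (simp add: bishop_def)
qed

lemma bD_B: "1 \<le> c \<Longrightarrow> c \<le> n \<Longrightarrow> bD (M,c) = (if cyc n c 1 \<le> W then M+1 else 1, cyc n c 1)"
proof -
  assume a: "1 \<le> c" "c \<le> n"
  have r: "sR m n FD (M,c) = (M, cyc n c 1)"
    by (rule sR_eq) (use a facts cyc_range[of n c 1] in \<open>auto simp: memD\<close>)
  show ?thesis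
  proof (cases "cyc n c 1 \<le> W")
    case True
    have "sC m n FD (M, cyc n c 1) = (cyc m M 1, cyc n c 1)"
      by (rule sC_eq) (use a True facts cyc_range[of n c 1] cyc1[of M m] in \<open>auto simp: memD\<close>)
    thus ?thesis using r True facts cyc1[of M m] by (simp add: bishop_def)
  next
    case False
    have "sC m n FD (M, cyc n c 1) = (cyc m M (h+1), cyc n c 1)"
    proof (rule sC_eq)
      show "(cyc m M (h + 1), cyc n c 1) \<in> FD"
        using a facts cyc_range[of n c 1] cyc_wrap[of M m "h+1"] m_eq by (auto simp: memD)
      show "\<forall>t'. 1 \<le> t' \<and> t' < h + 1 \<longrightarrow> (cyc m M t', cyc n c 1) \<notin> FD"
        using False facts cyc_small[of M t' m for t'] m_eq by (auto simp: memD)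
    qed simp
    thus ?thesis using r False facts cyc_wrap[of M m "h+1"] m_eq by (simp add: bishop_def)
  qed
qed

lemma sR_short: "M < r \<Longrightarrow> r \<le> m \<Longrightarrow> 1 \<le> c \<Longrightarrow> c \<le> W \<Longrightarrow> sR m n FD (r,c) = (r, cyc W c 1)"
proof -
  assume a: "M < r" "r \<le> m" "1 \<le> c" "c \<le> W"
  show ?thesis
  proof (cases "c < W")
    case True
    have "sR m n FD (r,c) = (r, cyc n c 1)"
      by (rule sR_eq) (use a True facts cyc1[of c n] in \<open>auto simp: memD\<close>)
    thus ?thesis using True a facts cyc1[of c n] cyc1[of c W] by simp
  next
    case False
    hence cW: "c = W" using a by simp
    have "sR m n FD (r,c) = (r, cyc n c (f+1))"
    proof (rule sR_eq)
      show "(r, cyc n c (f + 1)) \<in> FD" using a cW facts cyc_wrap[of W n "f+1"] by (auto simp: memD)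
      show "\<forall>t'. 1 \<le> t' \<and> t' < f + 1 \<longrightarrow> (r, cyc n c t') \<notin> FD"
        using a cW facts cyc_small[of W t' n for t'] by (auto simp: memD)
    qed simp
    thus ?thesis using cW facts cyc_wrap[of W n "f+1"] cyc1[of W W] by simp
  qed
qed

lemma bD_C: "M < r \<Longrightarrow> r \<le> m \<Longrightarrow> 1 \<le> c \<Longrightarrow> c \<le> W \<Longrightarrow> bD (r,c) = (cyc m r 1, cyc W c 1)"
proof -
  assume a: "M < r" "r \<le> m" "1 \<le> c" "c \<le> W"
  have "sC m n FD (r, cyc W c 1) = (cyc m r 1, cyc W c 1)"
    by (rule sC_eq) (use a facts cyc_range[of W c 1] cyc_range[of m r 1] in \<open>auto simp: memD\<close>)
  thus ?thesis using sR_short[OF a] by (simp add: bishop_def)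
qed


lemma bD'_A: "1 \<le> r \<Longrightarrow> r < L \<Longrightarrow> 1 \<le> c \<Longrightarrow> c \<le> n \<Longrightarrow> bD' (r,c) = (r+1, cyc n c 1)"
proof -
  assume a: "1 \<le> r" "r < L" "1 \<le> c" "c \<le> n"
  have r: "sR M n FD' (r,c) = (r, cyc n c 1)"
    by (rule sR_eq) (use a facts cyc_range[of n c 1] in \<open>auto simp: memD'\<close>)
  have "sC M n FD' (r, cyc n c 1) = (cyc M r 1, cyc n c 1)"
    by (rule sC_eq) (use a facts cyc_range[of n c 1] cyc1[of r M] in \<open>auto simp: memD'\<close>)
  thus ?thesis using r a facts cyc1[of r M] by (simp add: bishop_def)
qed

lemma bD'_B: "1 \<le> c \<Longrightarrow> c \<le> n \<Longrightarrow> bD' (L,c) = (if h < cyc n c 1 then L+1 else 1, cyc n c 1)"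
proof -
  assume a: "1 \<le> c" "c \<le> n"
  have r: "sR M n FD' (L,c) = (L, cyc n c 1)"
    by (rule sR_eq) (use a facts cyc_range[of n c 1] in \<open>auto simp: memD'\<close>)
  show ?thesis
  proof (cases "h < cyc n c 1")
    case True
    have "sC M n FD' (L, cyc n c 1) = (cyc M L 1, cyc n c 1)"
      by (rule sC_eq) (use a True facts cyc_range[of n c 1] cyc1[of L M] in \<open>auto simp: memD'\<close>)
    thus ?thesis using r True facts cyc1[of L M] by (simp add: bishop_def)
  next
    case False
    have "sC M n FD' (L, cyc n c 1) = (cyc M L (g-f+1), cyc n c 1)"
    proof (rule sC_eq)
      show "(cyc M L (g-f + 1), cyc n c 1) \<in> FD'"
        using a facts cyc_range[of n c 1] cyc_wrap[of L M "g-f+1"] by (auto simp: memD')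
      show "\<forall>t'. 1 \<le> t' \<and> t' < g-f + 1 \<longrightarrow> (cyc M L t', cyc n c 1) \<notin> FD'"
        using False facts cyc_small[of L t' M for t'] by (auto simp: memD')
    qed simp
    thus ?thesis using r False facts cyc_wrap[of L M "g-f+1"] by (simp add: bishop_def)
  qed
qed

lemma sR'_short: "L < r \<Longrightarrow> r \<le> M \<Longrightarrow> h < c \<Longrightarrow> c \<le> n \<Longrightarrow> sR M n FD' (r,c) = (r, h + cyc g (c-h) 1)"
proof -
  assume a: "L < r" "r \<le> M" "h < c" "c \<le> n"
  show ?thesis
  proof (cases "c < n")
    case True
    have "sR M n FD' (r,c) = (r, cyc n c 1)"
      by (rule sR_eq) (use a True facts cyc1[of c n] in \<open>auto simp: memD'\<close>)
    thus ?thesis using True a facts cyc1[of c n] cyc1[of "c-h" g] by simp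
  next
    case False
    hence cn: "c = n" using a by simp
    have nn: "cyc n n (h+1) = h+1" using facts by (simp add: cyc_def)
    have "sR M n FD' (r,c) = (r, cyc n c (h+1))"
    proof (rule sR_eq)
      show "(r, cyc n c (h + 1)) \<in> FD'" using a cn facts nn by (auto simp: memD')
      show "\<forall>t'. 1 \<le> t' \<and> t' < h + 1 \<longrightarrow> (r, cyc n c t') \<notin> FD'"
      proof (intro allI impI)
        fix t' assume t': "1 \<le> t' \<and> t' < h + 1"
        have "cyc n n t' = t'" using t' facts by (intro cyc_nn) auto
        thus "(r, cyc n c t') \<notin> FD'" using a cn t' by (auto simp: memD')
      qed
    qed simp
    moreover have "cyc n n (h+1) = h+1" using facts by (simp add: cyc_def)
    moreover have "cyc g g 1 = 1" using facts by (simp add: cyc_def)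
    ultimately show ?thesis using cn facts by simp
  qed
qed

lemma bD'_C: "L < r \<Longrightarrow> r \<le> M \<Longrightarrow> h < c \<Longrightarrow> c \<le> n \<Longrightarrow> bD' (r,c) = (cyc M r 1, h + cyc g (c-h) 1)"
proof -
  assume a: "L < r" "r \<le> M" "h < c" "c \<le> n"
  have "sC M n FD' (r, h + cyc g (c-h) 1) = (cyc M r 1, h + cyc g (c-h) 1)"
    by (rule sC_eq) (use a facts cyc_range[of g "c-h" 1] cyc_range[of M r 1] in \<open>auto simp: memD'\<close>)
  thus ?thesis using sR'_short[OF a] by (simp add: bishop_def)
qed


lemma bD_props: "x \<in> FD \<Longrightarrow> bD x \<in> FD \<and> (fst (bD x) = 1 \<or> fst (bD x) = Suc (fst x))"
proof -
  assume x: "x \<in> FD"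
  obtain r c where rc: "x = (r,c)" by (cases x)
  have a: "1 \<le> r" "r \<le> m" "1 \<le> c" "c \<le> n" "r \<le> M \<or> c \<le> W" using x rc by (auto simp: memD)
  consider "r < M" | "r = M" | "M < r" by linarith
  thus ?thesis
  proof cases
    case 1 thus ?thesis using a rc bD_A[of r c] cyc_range[of n c 1] facts by (auto simp: memD)
  next
    case 2 thus ?thesis using a rc bD_B[of c] cyc_range[of n c 1] facts by (auto simp: memD m_eq)
  next
    case 3 thus ?thesis using a rc bD_C[of r c] cyc_range[of W c 1] cyc_range[of m r 1] cyc1[of r m] facts
      by (auto simp: memD)
  qed
qed

lemma bD'_props: "x \<in> FD' \<Longrightarrow> bD' x \<in> FD' \<and> (fst (bD' x) = 1 \<or> fst (bD' x) = Suc (fst x))"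
proof -
  assume x: "x \<in> FD'"
  obtain r c where rc: "x = (r,c)" by (cases x)
  have a: "1 \<le> r" "r \<le> M" "1 \<le> c" "c \<le> n" "r \<le> L \<or> h < c" using x rc by (auto simp: memD')
  consider "r < L" | "r = L" | "L < r" by linarith
  thus ?thesis
  proof cases
    case 1 thus ?thesis using a rc bD'_A[of r c] cyc_range[of n c 1] facts by (auto simp: memD')
  next
    case 2 thus ?thesis using a rc bD'_B[of c] cyc_range[of n c 1] facts by (auto simp: memD')
  next
    case 3 thus ?thesis using a rc bD'_C[of r c] cyc_range[of g "c-h" 1] cyc_range[of M r 1] cyc1[of r M] facts
      by (auto simp: memD')
  qed
qed

lemma bD_pred: "y \<in> FD \<Longrightarrow> fst y \<noteq> 1 \<Longrightarrow> \<exists>x\<in>FD. bD x = y \<and> fst x < fst y"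
proof -
  assume y: "y \<in> FD" "fst y \<noteq> 1"
  obtain r c where rc: "y = (r,c)" by (cases y)
  have a: "2 \<le> r" "r \<le> m" "1 \<le> c" "c \<le> n" "r \<le> M \<or> c \<le> W" using y rc by (auto simp: memD)
  have cc: "cyc n (cyc n c (n-1)) 1 = c" using a facts cyc_add[of n c "n-1" 1] cyc_full[of c n] by simp
  have cr: "1 \<le> cyc n c (n-1) \<and> cyc n c (n-1) \<le> n" using facts cyc_range by blast
  consider "r \<le> M" | "r = M+1" | "M+1 < r" by linarith
  thus ?thesis
  proof cases
    case 1
    thus ?thesis using a rc bD_A[of "r-1" "cyc n c (n-1)"] cc cr by (intro bexI[of _ "(r-1, cyc n c (n-1))"]) (auto simp: memD)
  next
    case 2
    thus ?thesis using a rc bD_B[of "cyc n c (n-1)"] cc cr facts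
      by (intro bexI[of _ "(M, cyc n c (n-1))"]) (auto simp: memD)
  next
    case 3
    have cw: "cyc W (cyc W c (W-1)) 1 = c" using a 3 facts cyc_add[of W c "W-1" 1] cyc_full[of c W] by simp
    have cr2: "1 \<le> cyc W c (W-1) \<and> cyc W c (W-1) \<le> W" using facts cyc_range by blast
    have "cyc m (r-1) 1 = r" using 3 a cyc1[of "r-1" m] by simp
    thus ?thesis using a 3 rc bD_C[of "r-1" "cyc W c (W-1)"] cw cr2 facts
      by (intro bexI[of _ "(r-1, cyc W c (W-1))"]) (auto simp: memD)
  qed
qed

lemma bD'_pred: "y \<in> FD' \<Longrightarrow> fst y \<noteq> 1 \<Longrightarrow> \<exists>x\<in>FD'. bD' x = y \<and> fst x < fst y"
proof -
  assume y: "y \<in> FD'" "fst y \<noteq> 1"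
  obtain r c where rc: "y = (r,c)" by (cases y)
  have a: "2 \<le> r" "r \<le> M" "1 \<le> c" "c \<le> n" "r \<le> L \<or> h < c" using y rc by (auto simp: memD')
  have cc: "cyc n (cyc n c (n-1)) 1 = c" using a facts cyc_add[of n c "n-1" 1] cyc_full[of c n] by simp
  have cr: "1 \<le> cyc n c (n-1) \<and> cyc n c (n-1) \<le> n" using facts cyc_range by blast
  consider "r \<le> L" | "r = L+1" | "L+1 < r" by linarith
  thus ?thesis
  proof cases
    case 1
    thus ?thesis using a rc bD'_A[of "r-1" "cyc n c (n-1)"] cc cr by (intro bexI[of _ "(r-1, cyc n c (n-1))"]) (auto simp: memD')
  next
    case 2
    thus ?thesis using a rc bD'_B[of "cyc n c (n-1)"] cc cr facts
      by (intro bexI[of _ "(L, cyc n c (n-1))"]) (auto simp: memD')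
  next
    case 3
    have cw: "cyc g (cyc g (c-h) (g-1)) 1 = c-h" using a 3 facts cyc_add[of g "c-h" "g-1" 1] cyc_full[of "c-h" g] by simp
    have cr2: "1 \<le> cyc g (c-h) (g-1) \<and> cyc g (c-h) (g-1) \<le> g" using facts cyc_range by blast
    have "cyc M (r-1) 1 = r" using 3 a cyc1[of "r-1" M] by simp
    moreover have "1 \<le> r-1" "r-1 \<le> M" "L < r-1" using 3 a facts by linarith+
    ultimately show ?thesis using a 3 rc bD'_C[of "r-1" "h + cyc g (c-h) (g-1)"] cw cr2 facts
      by (intro bexI[of _ "(r-1, h + cyc g (c-h) (g-1))"]) (auto simp: memD')
  qed
qed


lemma D_it1: "1 \<le> c \<Longrightarrow> c \<le> n \<Longrightarrow> k < M \<Longrightarrow> (bD^^k) (1,c) = (1+k, cyc n c k)"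
proof (induction k)
  case 0 thus ?case by (simp add: cyc_0)
next
  case (Suc k)
  hence "(bD^^Suc k) (1,c) = bD (1+k, cyc n c k)" by simp
  also have "\<dots> = (Suc (1+k), cyc n c (Suc k))"
    using bD_A[of "1+k" "cyc n c k"] Suc.prems cyc_range[of n c k] cyc_add[of n c k 1] facts by simp
  finally show ?case by simp
qed

lemma D_itM: "1 \<le> c \<Longrightarrow> c \<le> n \<Longrightarrow> (bD^^M) (1,c) = (if cyc n c M \<le> W then M+1 else 1, cyc n c M)"
proof -
  assume a: "1 \<le> c" "c \<le> n"
  have "M = Suc (M-1)" using facts by simp
  hence "(bD^^M) (1,c) = bD ((bD^^(M-1)) (1,c))" by (metis funpow.simps(2) comp_apply)
  also have "\<dots> = bD (M, cyc n c (M-1))" using D_it1[OF a, of "M-1"] facts by simp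
  also have "\<dots> = (if cyc n c M \<le> W then M+1 else 1, cyc n c M)"
    using bD_B[of "cyc n c (M-1)"] cyc_range[of n c "M-1"] cyc_add[of n c "M-1" 1] facts by simp
  finally show ?thesis .
qed

lemma D_it2: "1 \<le> c \<Longrightarrow> c \<le> W \<Longrightarrow> j \<le> h \<Longrightarrow> (bD^^j) (M+1,c) = (cyc m (M+1) j, cyc W c j)"
proof (induction j)
  case 0 thus ?case using facts by (simp add: cyc_0 m_eq)
next
  case (Suc j)
  have r: "cyc m (M+1) j = M+1+j" using Suc.prems by (intro cyc_small) (auto simp: m_eq)
  have "(bD^^Suc j) (M+1,c) = bD (cyc m (M+1) j, cyc W c j)" using Suc by simp
  also have "\<dots> = (cyc m (M+1) (Suc j), cyc W c (Suc j))"
    using bD_C[of "cyc m (M+1) j" "cyc W c j"] r Suc.prems cyc_range[of W c j]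
      cyc_add[of W c j 1] cyc_add[of m "M+1" j 1] facts by (simp add: m_eq)
  finally show ?case .
qed

lemma D'_it1: "1 \<le> c \<Longrightarrow> c \<le> n \<Longrightarrow> k < L \<Longrightarrow> (bD'^^k) (1,c) = (1+k, cyc n c k)"
proof (induction k)
  case 0 thus ?case by (simp add: cyc_0)
next
  case (Suc k)
  hence "(bD'^^Suc k) (1,c) = bD' (1+k, cyc n c k)" by simp
  also have "\<dots> = (Suc (1+k), cyc n c (Suc k))"
    using bD'_A[of "1+k" "cyc n c k"] Suc.prems cyc_range[of n c k] cyc_add[of n c k 1] facts by simp
  finally show ?case by simp
qed

lemma D'_itL: "1 \<le> c \<Longrightarrow> c \<le> n \<Longrightarrow> (bD'^^L) (1,c) = (if h < cyc n c L then L+1 else 1, cyc n c L)"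
proof -
  assume a: "1 \<le> c" "c \<le> n"
  have "L = Suc (L-1)" using facts by simp
  hence "(bD'^^L) (1,c) = bD' ((bD'^^(L-1)) (1,c))" by (metis funpow.simps(2) comp_apply)
  also have "\<dots> = bD' (L, cyc n c (L-1))" using D'_it1[OF a, of "L-1"] facts by simp
  also have "\<dots> = (if h < cyc n c L then L+1 else 1, cyc n c L)"
    using bD'_B[of "cyc n c (L-1)"] cyc_range[of n c "L-1"] cyc_add[of n c "L-1" 1] facts by simp
  finally show ?thesis .
qed

lemma D'_it2: "h < c \<Longrightarrow> c \<le> n \<Longrightarrow> j \<le> g-f \<Longrightarrow> (bD'^^j) (L+1,c) = (cyc M (L+1) j, h + cyc g (c-h) j)"
proof (induction j)
  case 0 thus ?case using facts by (simp add: cyc_0)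
next
  case (Suc j)
  have r: "cyc M (L+1) j = L+1+j" using Suc.prems facts by (intro cyc_small) auto
  have "(bD'^^Suc j) (L+1,c) = bD' (cyc M (L+1) j, h + cyc g (c-h) j)" using Suc by simp
  also have "\<dots> = (cyc M (L+1) (Suc j), h + cyc g (c-h) (Suc j))"
    using bD'_C[of "cyc M (L+1) j" "h + cyc g (c-h) j"] r Suc.prems cyc_range[of g "c-h" j]
      cyc_add[of g "c-h" j 1] cyc_add[of M "L+1" j 1] facts by simp
  finally show ?case .
qed

end


context P48 begin

definition "Rc c = (let c1 = cyc n c M in if W < c1 then c1 else cyc W c1 h)"
definition "Rc' c = (let c1 = cyc n c L in if c1 \<le> h then c1 else h + cyc g (c1-h) (g-f))"

lemma Rc_eq: "1 \<le> c \<Longrightarrow> c \<le> n \<Longrightarrow> Rc c = Rc' c"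
proof -
  assume a: "1 \<le> c" "c \<le> n"
  define y where "y = (c - 1 + M) mod n"
  define z where "z = (c - 1 + L) mod n"
  have yn: "y < n" using facts by (simp add: y_def)
  have "(c - 1 + L) mod n = (c - 1 + L + n) mod n" by simp
  also have "c - 1 + L + n = (c - 1 + M) + (n - (g-f))" using facts by simp
  finally have z: "z = (y + (n - (g-f))) mod n" by (simp add: z_def y_def mod_add_left_eq)
  have c1: "cyc n c M = y + 1" by (simp add: cyc_def y_def)
  have c1': "cyc n c L = z + 1" by (simp add: cyc_def z_def)
  have RcY: "Rc c = (if W \<le> y then y+1 else (y+h) mod W + 1)"
    unfolding Rc_def Let_def c1 by (simp add: cyc_def)
  consider "W \<le> y" | "y < g-f" | "g-f \<le> y" "y < W" by linarith
  thus ?thesis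
  proof cases
    case 1
    have "z = y - (g-f)" using z 1 yn facts mod_once[of n "y + (n - (g-f))"] by simp
    hence zz: "h \<le> z" "z - h + (g-f) = y - h" "y - h < g" using 1 yn facts by auto
    have "Rc' c = h + cyc g (z + 1 - h) (g-f)" unfolding Rc'_def Let_def c1' using zz by simp
    also have "\<dots> = h + (y - h) + 1" using zz by (simp add: cyc_def Suc_diff_le)
    finally show ?thesis using RcY 1 zz facts by simp
  next
    case 2
    have "z = y + h + f" using z 2 yn facts by simp
    hence zz: "h \<le> z" "z - h + (g-f) = y + g" using 2 facts by auto
    have "Rc' c = h + cyc g (z + 1 - h) (g-f)" unfolding Rc'_def Let_def c1' using zz by simp
    also have "\<dots> = h + y + 1" using zz 2 facts by (simp add: cyc_def Suc_diff_le)
    finally show ?thesis using RcY 2 facts by simp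
  next
    case 3
    have "z = y - (g-f)" using z 3 yn facts mod_once[of n "y + (n - (g-f))"] by simp
    hence zz: "z < h" using 3 facts by auto
    have "Rc' c = z + 1" unfolding Rc'_def Let_def c1' using zz by simp
    moreover have "(y+h) mod W = y + h - W" using 3 facts mod_once[of W "y+h"] by simp
    ultimately show ?thesis using RcY 3 facts \<open>z = y - (g-f)\<close> by simp
  qed
qed


definition "R x = (1::nat, Rc (snd x))"
definition "S0 = {1::nat} \<times> {1..n}"

lemma Rc_range: "1 \<le> Rc c \<and> Rc c \<le> n"
  using cyc_range[of n c M] cyc_range[of W "cyc n c M" h] facts by (auto simp: Rc_def Let_def)

lemma ret_D: "s \<in> S0 \<Longrightarrow> \<exists>t. 1 \<le> t \<and> (bD^^t) s = R s \<and> (\<forall>j. 0<j \<and> j<t \<longrightarrow> (bD^^j) s \<notin> S0)"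
proof -
  assume "s \<in> S0"
  then obtain c where s: "s = (1,c)" "1 \<le> c" "c \<le> n" by (auto simp: S0_def)
  define c1 where "c1 = cyc n c M"
  have c1r: "1 \<le> c1" "c1 \<le> n" using cyc_range[of n c M] facts by (auto simp: c1_def)
  have it1: "(bD^^j) s \<notin> S0" if "0 < j" "j < M" for j
    using D_it1[of c j] s that by (auto simp: S0_def)
  show ?thesis
  proof (cases "W < c1")
    case True
    have "(bD^^M) s = R s" using D_itM[of c] s True by (simp add: R_def Rc_def c1_def Let_def)
    thus ?thesis using it1 facts by (intro exI[of _ M]) auto
  next
    case False
    have M: "(bD^^M) s = (M+1, c1)" using D_itM[of c] s False by (simp add: c1_def)
    have "(bD^^(h+M)) s = (bD^^h) ((bD^^M) s)" by (simp add: funpow_add)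
    also have "\<dots> = (cyc m (M+1) h, cyc W c1 h)" using M D_it2[of c1 h] c1r False by simp
    also have "\<dots> = R s" using cyc_wrap[of "M+1" m h] False s facts
      by (simp add: m_eq R_def Rc_def c1_def Let_def)
    finally have e: "(bD^^(h+M)) s = R s" .
    have mid: "(bD^^j) s \<notin> S0" if "0 < j" "j < h + M" for j
    proof (cases "j < M")
      case True thus ?thesis using it1 that by blast
    next
      case False
      have "(bD^^j) s = (bD^^(j-M)) ((bD^^M) s)" using False
        by (metis funpow_add comp_apply le_add_diff_inverse2 not_less)
      also have "\<dots> = (cyc m (M+1) (j-M), cyc W c1 (j-M))" using M D_it2[of c1 "j-M"] c1r \<open>\<not> W < c1\<close> that by simp
      also have "cyc m (M+1) (j-M) = M+1+(j-M)" using that False by (intro cyc_small) (auto simp: m_eq)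
      finally show ?thesis using facts by (auto simp: S0_def)
    qed
    have "1 \<le> h+M" using facts by simp
    thus ?thesis using e mid by (intro exI[of _ "h+M"]) auto
  qed
qed

lemma ret_D': "s \<in> S0 \<Longrightarrow> \<exists>t. 1 \<le> t \<and> (bD'^^t) s = R s \<and> (\<forall>j. 0<j \<and> j<t \<longrightarrow> (bD'^^j) s \<notin> S0)"
proof -
  assume "s \<in> S0"
  then obtain c where s: "s = (1,c)" "1 \<le> c" "c \<le> n" by (auto simp: S0_def)
  define c1 where "c1 = cyc n c L"
  have Rs: "R s = (1, Rc' c)" using Rc_eq[of c] s by (simp add: R_def)
  have c1r: "1 \<le> c1" "c1 \<le> n" using cyc_range[of n c L] facts by (auto simp: c1_def)
  have it1: "(bD'^^j) s \<notin> S0" if "0 < j" "j < L" for j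
    using D'_it1[of c j] s that by (auto simp: S0_def)
  show ?thesis
  proof (cases "c1 \<le> h")
    case True
    have "(bD'^^L) s = R s" using D'_itL[of c] s True Rs by (simp add: Rc'_def c1_def Let_def)
    thus ?thesis using it1 facts by (intro exI[of _ L]) auto
  next
    case False
    have M: "(bD'^^L) s = (L+1, c1)" using D'_itL[of c] s False by (simp add: c1_def)
    have "(bD'^^((g-f)+L)) s = (bD'^^(g-f)) ((bD'^^L) s)" by (simp add: funpow_add)
    also have "\<dots> = (cyc M (L+1) (g-f), h + cyc g (c1-h) (g-f))" using M D'_it2[of c1 "g-f"] c1r False by simp
    also have "\<dots> = R s" using cyc_wrap[of "L+1" M "g-f"] False s facts Rs
      by (simp add: Rc'_def c1_def Let_def)
    finally have e: "(bD'^^((g-f)+L)) s = R s" .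
    have mid: "(bD'^^j) s \<notin> S0" if "0 < j" "j < (g-f) + L" for j
    proof (cases "j < L")
      case True thus ?thesis using it1 that by blast
    next
      case False
      have "(bD'^^j) s = (bD'^^(j-L)) ((bD'^^L) s)" using False
        by (metis funpow_add comp_apply le_add_diff_inverse2 not_less)
      also have "\<dots> = (cyc M (L+1) (j-L), h + cyc g (c1-h) (j-L))" using M D'_it2[of c1 "j-L"] c1r \<open>\<not> c1 \<le> h\<close> that by simp
      also have "cyc M (L+1) (j-L) = L+1+(j-L)" using that False facts by (intro cyc_small) auto
      finally show ?thesis using facts by (auto simp: S0_def)
    qed
    show ?thesis using e mid facts by (intro exI[of _ "(g-f)+L"]) auto
  qed
qed

lemma cyclD: "cycl bD FD \<longleftrightarrow> cycl R S0"
proof (rule section_cycl)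
  show fA: "\<forall>x\<in>FD. bD x \<in> FD" using bD_props by blast
  show "S0 \<subseteq> FD" using facts by (auto simp: S0_def memD)
  show "\<forall>s\<in>S0. \<exists>t\<ge>1. (bD ^^ t) s = R s \<and> (\<forall>j. 0 < j \<and> j < t \<longrightarrow> (bD ^^ j) s \<notin> S0)"
    using ret_D by blast
  show "\<forall>s\<in>S0. R s \<in> S0" using Rc_range by (auto simp: S0_def R_def)
  show "\<forall>x\<in>FD. \<exists>k. (bD ^^ k) x \<in> S0"
  proof
    fix x assume x: "x \<in> FD"
    have bnd: "\<forall>x\<in>FD. fst x \<le> m"
    proof
      fix x assume "x \<in> FD" thus "fst x \<le> m" by (cases x) (auto simp: memD)
    qed
    obtain k where "fst ((bD^^k) x) = 1" using reach_row1[OF fA bnd _ x] bD_props by blast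
    moreover have "(bD^^k) x \<in> FD" using funpow_in[OF fA x] .
    ultimately show "\<exists>k. (bD ^^ k) x \<in> S0"
      by (intro exI[of _ k]) (cases "(bD^^k) x", auto simp: S0_def memD)
  qed
  show "\<forall>y\<in>FD. \<exists>s\<in>S0. \<exists>k. (bD ^^ k) s = y"
  proof
    fix y assume y: "y \<in> FD"
    obtain s k where sk: "s \<in> FD" "fst s = 1" "(bD^^k) s = y"
      using cover_row1[of FD bD y] bD_pred y by blast
    have "s \<in> S0" using sk(1,2) by (cases s) (auto simp: S0_def memD)
    thus "\<exists>s\<in>S0. \<exists>k. (bD ^^ k) s = y" using sk(3) by blast
  qed
qed

lemma cyclD': "cycl bD' FD' \<longleftrightarrow> cycl R S0"
proof (rule section_cycl)
  show fA: "\<forall>x\<in>FD'. bD' x \<in> FD'" using bD'_props by blast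
  show "S0 \<subseteq> FD'" using facts by (auto simp: S0_def memD')
  show "\<forall>s\<in>S0. \<exists>t\<ge>1. (bD' ^^ t) s = R s \<and> (\<forall>j. 0 < j \<and> j < t \<longrightarrow> (bD' ^^ j) s \<notin> S0)"
    using ret_D' by blast
  show "\<forall>s\<in>S0. R s \<in> S0" using Rc_range by (auto simp: S0_def R_def)
  show "\<forall>x\<in>FD'. \<exists>k. (bD' ^^ k) x \<in> S0"
  proof
    fix x assume x: "x \<in> FD'"
    have bnd: "\<forall>x\<in>FD'. fst x \<le> M"
    proof
      fix x assume "x \<in> FD'" thus "fst x \<le> M" by (cases x) (auto simp: memD')
    qed
    obtain k where "fst ((bD'^^k) x) = 1" using reach_row1[OF fA bnd _ x] bD'_props by blast
    moreover have "(bD'^^k) x \<in> FD'" using funpow_in[OF fA x] .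
    ultimately show "\<exists>k. (bD' ^^ k) x \<in> S0"
      by (intro exI[of _ k]) (cases "(bD'^^k) x", auto simp: S0_def memD')
  qed
  show "\<forall>y\<in>FD'. \<exists>s\<in>S0. \<exists>k. (bD' ^^ k) s = y"
  proof
    fix y assume y: "y \<in> FD'"
    obtain s k where sk: "s \<in> FD'" "fst s = 1" "(bD'^^k) s = y"
      using cover_row1[of FD' bD' y] bD'_pred y by blast
    have "s \<in> S0" using sk(1,2) by (cases s) (auto simp: S0_def memD')
    thus "\<exists>s\<in>S0. \<exists>k. (bD' ^^ k) s = y" using sk(3) by blast
  qed
qed

lemma main: "solves bD FD \<longleftrightarrow> solves bD' FD'"
proof -
  have fin: "finite FD" "finite FD'" by (auto simp: FD_def FD'_def grid_def)
  show ?thesis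
    using solves_iff_cycl[OF fin(1), of bD] solves_iff_cycl[OF fin(2), of bD'] bD_props bD'_props
      cyclD cyclD' by blast
qed

end

theorem lemma4p8:
  fixes i h g f :: nat
  assumes "0 < i" "0 < h" "0 < g" "0 < f" "f < g" "f \<le> h" "g - f < i * h"
  defines "FD \<equiv> grid ((i+1)*h) (h+g) - ({i*h+1..(i+1)*h} \<times> {h+g-f+1..h+g})"
      and "FD' \<equiv> grid (i*h) (h+g) - ({i*h-(g-f)+1..i*h} \<times> {1..h})"
  shows "solves (bishop ((i+1)*h) (h+g) FD) FD \<longleftrightarrow> solves (bishop (i*h) (h+g) FD') FD'"
proof -
  interpret P: P48 i h g f using assms by unfold_locales auto
  show ?thesis using P.main unfolding FD_def FD'_def P.FD_def P.FD'_def P.m_def P.n_def P.M_def .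
qed

end
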